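(* Let $v_1\ge v_2>0$, $m\in\mathbb{Z}_{\ge1}$, $\alpha\in(0,1)$ and $0<b\le m$. If a strategy profile $(X,Y)$ with $\mathbf{E}(X)=m+\alpha$ and $\mathbf{E}(Y)=b$ is a Nash equilibrium of the discrete all-pay auction with valuations $v_1,v_2$, then $\frac{m(m+1)}{b}=\frac{v_1}{2}$, $(X,Y)$ is a Nash equilibrium of the General Lotto game $\Gamma(m+\alpha,b)$, and $Y=\left(1-\frac bm\right)\delta_0+\frac bmU_{\mathrm{E}}^m$.
   Context: Discrete all-pay auction: two players, 1 and 2, value a prize at $v_1$ and $v_2$ respectively, where $v_1\ge v_2>0$. A (mixed) strategy is a probability distribution on $\mathbb{Z}_{\ge 0}$ with finite mean, identified with a $\mathbb{Z}_{\ge0}$-valued random variable; the two players' choices are independent. If player 1 uses $X$ and player 2 uses $Y$, the expected payoffs are $P^1(X,Y)=v_1\Pr(X>Y)+\frac{v_1}{2}\Pr(X=Y)-\mathbf{E}(X)$ and $P^2(Y,X)=v_2\Pr(Y>X)+\frac{v_2}{2}\Pr(X=Y)-\mathbf{E}(Y)$. A Nash equilibrium of the all-pay auction is a pair $(X,Y)$ with $P^1(X,Y)\ge P^1(X',Y)$ and $P^2(Y,X)\ge P^2(Y',X)$ for all strategies $X',Y'$. $\delta_j$ denotes the point mass at $j$; $\lambda A+(1-\lambda)B$ denotes the mixture of distributions $A$ and $B$. Discrete General Lotto game: for reals $a,b\ge 0$, in $\Gamma(a,b)$ player 1 chooses a distribution $X$ on $\mathbb{Z}_{\ge0}$ with $\mathbf{E}(X)=a$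 and player 2 chooses a distribution $Y$ on $\mathbb{Z}_{\ge 0}$ with $\mathbf{E}(Y)=b$ (independently); the payoff to player 1 is $H(X,Y)=\Pr(X>Y)-\Pr(X<Y)$ and to player 2 is $H(Y,X)=-H(X,Y)$. A Nash equilibrium of $\Gamma(a,b)$ is a pair $(X,Y)$ from these strategy sets such that neither player can increase her payoff by switching to another strategy in her own strategy set. For $m\ge0$, $U_{\mathrm{E}}^m$ is the uniform distribution on $\{0,2,\dots,2m\}$. *)

theory Defs
  imports "HOL-Probability.Probability"
begin

definition strategy :: "nat pmf \<Rightarrow> bool" where
  "strategy X \<longleftrightarrow> integrable (measure_pmf X) real"

definition mean :: "nat pmf \<Rightarrow> real" where
  "mean X = measure_pmf.expectation X real"

definition prob_gt :: "nat pmf \<Rightarrow> nat pmf \<Rightarrow> real" where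
  "prob_gt A B = measure_pmf.prob (pair_pmf A B) {(x, y). x > y}"

definition prob_eq :: "nat pmf \<Rightarrow> nat pmf \<Rightarrow> real" where
  "prob_eq A B = measure_pmf.prob (pair_pmf A B) {(x, y). x = y}"

definition allpay_payoff :: "real \<Rightarrow> nat pmf \<Rightarrow> nat pmf \<Rightarrow> real" where
  "allpay_payoff v A B = v * prob_gt A B + v / 2 * prob_eq A B - mean A"

definition allpay_NE :: "real \<Rightarrow> real \<Rightarrow> nat pmf \<Rightarrow> nat pmf \<Rightarrow> bool" where
  "allpay_NE v1 v2 X Y \<longleftrightarrow> strategy X \<and> strategy Y \<and>
     (\<forall>X'. strategy X' \<longrightarrow> allpay_payoff v1 X' Y \<le> allpay_payoff v1 X Y) \<and>
     (\<forall>Y'. strategy Y' \<longrightarrow> allpay_payoff v2 Y' X \<le> allpay_payoff v2 Y X)"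

definition lotto_H :: "nat pmf \<Rightarrow> nat pmf \<Rightarrow> real" where
  "lotto_H A B = prob_gt A B - prob_gt B A"

definition lotto_NE :: "real \<Rightarrow> real \<Rightarrow> nat pmf \<Rightarrow> nat pmf \<Rightarrow> bool" where
  "lotto_NE a b X Y \<longleftrightarrow>
     strategy X \<and> mean X = a \<and> strategy Y \<and> mean Y = b \<and>
     (\<forall>X'. strategy X' \<and> mean X' = a \<longrightarrow> lotto_H X' Y \<le> lotto_H X Y) \<and>
     (\<forall>Y'. strategy Y' \<and> mean Y' = b \<longrightarrow> lotto_H Y' X \<le> lotto_H Y X)"

definition U_E :: "nat \<Rightarrow> nat pmf" where
  "U_E m = pmf_of_set ((\<lambda>k. 2 * k) ` {0..m})"

definition mix :: "real \<Rightarrow> nat pmf \<Rightarrow> nat pmf \<Rightarrow> nat pmf" where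
  "mix l A B = bind_pmf (bernoulli_pmf l) (\<lambda>c. if c then A else B)"

end

theory Submission imports Defs begin

lemma int_bound:
  fixes f :: "nat \<Rightarrow> real"
  assumes "\<And>x. \<bar>f x\<bar> \<le> C"
  shows "integrable (measure_pmf A) f"
  by (rule measure_pmf.integrable_const_bound[where B=C]) (use assms in auto)

lemma prob_pair:
  fixes A B :: "nat pmf"
  shows "measure_pmf.prob (pair_pmf A B) S = measure_pmf.expectation A (\<lambda>x. measure_pmf.prob B {y. (x,y) \<in> S})"
proof -
  have "ennreal (measure_pmf.prob (pair_pmf A B) S) = emeasure (pair_pmf A B) S"
    by (simp add: measure_pmf.emeasure_eq_measure)
  also have "\<dots> = (\<integral>\<^sup>+z. indicator S z \<partial>pair_pmf A B)" by simp
  also have "\<dots> = (\<integral>\<^sup>+a. \<integral>\<^sup>+b. indicator S (a,b) \<partial>B \<partial>A)" by (rule nn_integral_pair_pmf')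
  also have "\<dots> = (\<integral>\<^sup>+a. ennreal (measure_pmf.prob B {y. (a,y) \<in> S}) \<partial>A)"
  proof (rule nn_integral_cong)
    fix a
    have "(\<integral>\<^sup>+b. indicator S (a,b) \<partial>B) = (\<integral>\<^sup>+b. indicator {y. (a,y) \<in> S} b \<partial>B)"
      by (rule nn_integral_cong) (auto split: split_indicator)
    also have "\<dots> = emeasure B {y. (a,y) \<in> S}" by simp
    also have "\<dots> = ennreal (measure_pmf.prob B {y. (a,y) \<in> S})"
      by (simp add: measure_pmf.emeasure_eq_measure)
    finally show "(\<integral>\<^sup>+b. indicator S (a,b) \<partial>B) = ennreal (measure_pmf.prob B {y. (a,y) \<in> S})" .
  qed
  also have "\<dots> = ennreal (measure_pmf.expectation A (\<lambda>x. measure_pmf.prob B {y. (x,y) \<in> S}))"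
    by (rule nn_integral_eq_integral) (auto intro!: int_bound[where C=1])
  finally show ?thesis
    by (subst (asm) ennreal_inj) (auto intro!: integral_nonneg_AE)
qed

definition Gc :: "nat pmf \<Rightarrow> nat \<Rightarrow> real" where
  "Gc B k = measure_pmf.prob B {..k}"

definition wfn :: "nat pmf \<Rightarrow> nat \<Rightarrow> real" where
  "wfn B k = measure_pmf.prob B {..<k} + Gc B k"

definition Ew :: "nat pmf \<Rightarrow> nat pmf \<Rightarrow> real" where
  "Ew A B = measure_pmf.expectation A (wfn B)"

lemma Gc_sum: "Gc B k = (\<Sum>i\<le>k. pmf B i)"
  unfolding Gc_def by (simp add: measure_measure_pmf_finite)

lemma lt_sum: "measure_pmf.prob B {..<k::nat} = (\<Sum>i<k. pmf B i)"
  by (rule measure_measure_pmf_finite) simp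

lemma wfn_bound: "\<bar>wfn B k\<bar> \<le> 2"
proof -
  have "measure_pmf.prob B {..<k} \<le> 1" "Gc B k \<le> 1" "0 \<le> measure_pmf.prob B {..<k}" "0 \<le> Gc B k"
    unfolding Gc_def by (auto simp: measure_pmf.prob_le_1)
  then show ?thesis unfolding wfn_def by linarith
qed

lemma gt_rep: "prob_gt A B = measure_pmf.expectation A (\<lambda>x. measure_pmf.prob B {..<x})"
  unfolding prob_gt_def prob_pair by (rule Bochner_Integration.integral_cong) (auto intro!: arg_cong[where f="measure_pmf.prob B"])

lemma eq_rep: "prob_eq A B = measure_pmf.expectation A (\<lambda>x. pmf B x)"
  unfolding prob_eq_def prob_pair by (rule Bochner_Integration.integral_cong) (auto simp: measure_pmf_single[symmetric] intro!: arg_cong[where f="measure_pmf.prob B"])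

lemma gt_swap: "prob_gt B A = measure_pmf.expectation A (\<lambda>x. measure_pmf.prob B {x<..})"
proof -
  have "prob_gt B A = measure_pmf.prob (pair_pmf A B) {(x,y). y > x}"
    unfolding prob_gt_def by (subst pair_commute_pmf) (auto intro!: arg_cong[where f="measure_pmf.prob (pair_pmf A B)"])
  also have "\<dots> = measure_pmf.expectation A (\<lambda>x. measure_pmf.prob B {x<..})"
    unfolding prob_pair by (rule Bochner_Integration.integral_cong) (auto intro!: arg_cong[where f="measure_pmf.prob B"])
  finally show ?thesis .
qed

lemma split_le: "measure_pmf.prob B {..k::nat} = measure_pmf.prob B {..<k} + pmf B k"
proof -
  have "measure_pmf.prob B {..k} = (\<Sum>i\<le>k. pmf B i)" by (rule measure_measure_pmf_finite) simp
  also have "\<dots> = (\<Sum>i<k. pmf B i) + pmf B k" by (simp add: lessThan_Suc_atMost[symmetric])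
  finally show ?thesis by (simp add: lt_sum)
qed

lemma split_gt: "measure_pmf.prob B {k::nat<..} = 1 - measure_pmf.prob B {..k}"
proof -
  have "{k<..} = UNIV - {..k}" by auto
  moreover have "measure_pmf.prob B (space (measure_pmf B) - {..k}) = 1 - measure_pmf.prob B {..k}"
    by (rule measure_pmf.prob_compl) simp
  ultimately show ?thesis by simp
qed

lemma payoff_rep: "allpay_payoff v A B = v/2 * Ew A B - mean A"
proof -
  have i1: "integrable (measure_pmf A) (\<lambda>x. measure_pmf.prob B {..<x})" by (rule int_bound[where C=1]) auto
  have i2: "integrable (measure_pmf A) (\<lambda>x. pmf B x)" by (rule int_bound[where C=1]) (auto simp: pmf_le_1)
  have "Ew A B = measure_pmf.expectation A (\<lambda>x. 2 * measure_pmf.prob B {..<x} + pmf B x)"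
    unfolding Ew_def wfn_def Gc_def by (rule Bochner_Integration.integral_cong) (auto simp: split_le)
  also have "\<dots> = 2 * prob_gt A B + prob_eq A B"
    using i1 i2 by (simp add: gt_rep eq_rep)
  finally show ?thesis unfolding allpay_payoff_def by (simp add: algebra_simps)
qed

lemma lotto_rep: "lotto_H A B = Ew A B - 1"
proof -
  have i1: "integrable (measure_pmf A) (\<lambda>x. measure_pmf.prob B {..<x})" by (rule int_bound[where C=1]) auto
  have i2: "integrable (measure_pmf A) (\<lambda>x. measure_pmf.prob B {..x})" by (rule int_bound[where C=1]) auto
  have "lotto_H A B = measure_pmf.expectation A (\<lambda>x. measure_pmf.prob B {..<x}) - measure_pmf.expectation A (\<lambda>x. 1 - measure_pmf.prob B {..x})"
    unfolding lotto_H_def gt_swap[of B A] gt_rep[of A B] split_gt ..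
  also have "\<dots> = measure_pmf.expectation A (\<lambda>x. measure_pmf.prob B {..<x} + measure_pmf.prob B {..x}) - 1"
    using i1 i2 by simp
  finally show ?thesis unfolding Ew_def wfn_def Gc_def .
qed

lemma Ew_sym: "Ew A B + Ew B A = 2"
  using lotto_rep[of A B] lotto_rep[of B A] unfolding lotto_H_def by simp

lemma strat_finite: "finite (set_pmf A) \<Longrightarrow> strategy A"
  unfolding strategy_def by (rule integrable_measure_pmf_finite)

lemma return_facts: "strategy (return_pmf k)" "mean (return_pmf k) = real k" "Ew (return_pmf k) B = wfn B k"
  by (auto intro: strat_finite simp: mean_def Ew_def)

lemma pmf_mix: assumes "0 \<le> l" "l \<le> 1"
  shows "pmf (mix l A B) k = l * pmf A k + (1 - l) * pmf B k"
proof -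
  have "pmf (mix l A B) k = (\<integral>c. pmf (if c then A else B) k \<partial>measure_pmf (bernoulli_pmf l))"
    unfolding mix_def pmf_bind ..
  also have "\<dots> = (\<Sum>c\<in>UNIV. pmf (if c then A else B) k * pmf (bernoulli_pmf l) c)"
    by (rule integral_measure_pmf_real) auto
  also have "\<dots> = l * pmf A k + (1 - l) * pmf B k"
    using assms by (simp add: UNIV_bool)
  finally show ?thesis .
qed

lemma set_mix: assumes "0 \<le> l" "l \<le> 1"
  shows "set_pmf (mix l A B) \<subseteq> set_pmf A \<union> set_pmf B"
proof
  fix k assume "k \<in> set_pmf (mix l A B)"
  then have "pmf (mix l A B) k \<noteq> 0" by (simp add: set_pmf_iff)
  then show "k \<in> set_pmf A \<union> set_pmf B"
    using pmf_mix[OF assms] by (auto simp: set_pmf_iff)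
qed

lemma exp_mix:
  fixes f :: "nat \<Rightarrow> real"
  assumes "0 \<le> l" "l \<le> 1" "finite (set_pmf A)" "finite (set_pmf B)"
  shows "measure_pmf.expectation (mix l A B) f = l * measure_pmf.expectation A f + (1 - l) * measure_pmf.expectation B f"
proof -
  let ?S = "set_pmf A \<union> set_pmf B"
  have fS: "finite ?S" using assms by auto
  have "measure_pmf.expectation (mix l A B) f = (\<Sum>k\<in>?S. f k * pmf (mix l A B) k)"
    by (rule integral_measure_pmf_real[OF fS]) (use set_mix[OF assms(1,2)] in auto)
  also have "\<dots> = (\<Sum>k\<in>?S. l * (f k * pmf A k) + (1 - l) * (f k * pmf B k))"
    by (rule sum.cong) (auto simp: pmf_mix[OF assms(1,2)] algebra_simps)
  also have "\<dots> = l * (\<Sum>k\<in>?S. f k * pmf A k) + (1 - l) * (\<Sum>k\<in>?S. f k * pmf B k)"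
    by (simp add: sum.distrib sum_distrib_left)
  also have "(\<Sum>k\<in>?S. f k * pmf A k) = measure_pmf.expectation A f"
    by (rule integral_measure_pmf_real[OF fS, symmetric]) auto
  also have "(\<Sum>k\<in>?S. f k * pmf B k) = measure_pmf.expectation B f"
    by (rule integral_measure_pmf_real[OF fS, symmetric]) auto
  finally show ?thesis .
qed


lemma set_UE: "set_pmf (U_E m) = (\<lambda>k. 2 * k) ` {0..m}"
  unfolding U_E_def by (rule set_pmf_of_set) auto

lemma exp_UE:
  fixes f :: "nat \<Rightarrow> real"
  shows "measure_pmf.expectation (U_E m) f = (\<Sum>i=0..m. f (2 * i)) / (real m + 1)"
proof -
  have inj: "inj_on (\<lambda>k::nat. 2 * k) {0..m}" by (auto simp: inj_on_def)
  have "measure_pmf.expectation (U_E m) f = sum f ((\<lambda>k. 2 * k) ` {0..m}) / card ((\<lambda>k. 2 * k) ` {0..m})"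
    unfolding U_E_def by (rule integral_pmf_of_set) auto
  also have "\<dots> = (\<Sum>i=0..m. f (2 * i)) / (real m + 1)"
    using inj by (simp add: sum.reindex card_image)
  finally show ?thesis .
qed

lemma pmf_UE: "pmf (U_E m) k = (if k \<in> (\<lambda>k. 2 * k) ` {0..m} then 1 / (real m + 1) else 0)"
proof -
  have inj: "inj_on (\<lambda>k::nat. 2 * k) {0..m}" by (auto simp: inj_on_def)
  show ?thesis unfolding U_E_def
    by (subst pmf_of_set) (use inj in \<open>auto simp: card_image\<close>)
qed

lemma Gc_int: "Gc B l = measure_pmf.expectation B (indicator {..l})"
  unfolding Gc_def by simp

lemma ind_sum: "(\<Sum>l<L. (indicator {..l} y :: real)) = real (L - y)"
  by (induction L) (auto simp: indicator_def Suc_diff_le)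

lemma sumG: "(\<Sum>l<L. Gc B l) = measure_pmf.expectation B (\<lambda>y. real (L - y))"
proof -
  have "(\<Sum>l<L. Gc B l) = measure_pmf.expectation B (\<lambda>y. \<Sum>l<L. (indicator {..l} y :: real))"
    unfolding Gc_int
    by (rule Bochner_Integration.integral_sum[symmetric]) (auto intro!: int_bound[where C=1])
  then show ?thesis by (simp add: ind_sum)
qed

lemma wfn_Suc: "wfn B (Suc k) = Gc B k + Gc B (Suc k)"
  unfolding wfn_def Gc_def by (simp add: lessThan_Suc_atMost)

lemma wfn_0: "wfn B 0 = Gc B 0"
  unfolding wfn_def by simp

lemma odd_sum: "(\<Sum>i<n. wfn B (2 * i + 1)) = (\<Sum>l<2 * n. Gc B l)"
  by (induction n) (auto simp: wfn_Suc)

lemma even_sum: "(\<Sum>i=0..n. wfn B (2 * i)) = (\<Sum>l<2 * n + 1. Gc B l)"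
proof (induction n)
  case 0 then show ?case by (simp add: wfn_0)
next
  case (Suc n)
  have "wfn B (2 * Suc n) = Gc B (2 * n + 1) + Gc B (2 * n + 2)"
    using wfn_Suc[of B "2 * n + 1"] by simp
  then show ?case using Suc by simp
qed

lemma sum_even_real: "(\<Sum>i=0..m. real (2 * i)) = real m * (real m + 1)"
  by (induction m) (auto simp: algebra_simps)

lemma sum_odd_real: "(\<Sum>i<n. real (2 * i + 1)) = real n * real n"
  by (induction n) (auto simp: algebra_simps)

lemma exp_ge:
  assumes "strategy B"
  shows "measure_pmf.expectation B (\<lambda>y. real (L - y)) \<ge> real L - mean B"
proof -
  have iB: "integrable (measure_pmf B) real" using assms unfolding strategy_def .
  have "real L - mean B = measure_pmf.expectation B (\<lambda>y. real L - real y)"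
    using iB by (simp add: mean_def)
  also have "\<dots> \<le> measure_pmf.expectation B (\<lambda>y. real (L - y))"
    by (rule integral_mono) (use iB in \<open>auto intro!: int_bound[where C="real L"]\<close>)
  finally show ?thesis .
qed

lemma mem_E_even: "2 * (k::nat) \<in> (\<lambda>k. 2 * k) ` {0..m} \<longleftrightarrow> k \<le> m"
  by auto

lemma mem_E_odd: "Suc (2 * (k::nat)) \<notin> (\<lambda>k. 2 * k) ` {0..m}"
  by auto presburger

lemma Ys_facts:
  fixes m :: nat and b :: real
  assumes "m \<ge> 1" "0 < b" "b \<le> real m"
  defines "Ys \<equiv> mix (1 - b / real m) (return_pmf 0) (U_E m)"
  shows "finite (set_pmf Ys)" "strategy Ys" "mean Ys = b"
    "\<And>f. measure_pmf.expectation Ys f = (1 - b / real m) * f 0 + b / real m * ((\<Sum>i=0..m. f (2 * i)) / (real m + 1))"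
    "\<And>n. pmf Ys n = (1 - b / real m) * (if n = 0 then 1 else 0) + b / real m * (if n \<in> (\<lambda>k. 2 * k) ` {0..m} then 1 / (real m + 1) else 0)"
proof -
  have l0: "0 \<le> 1 - b / real m" "1 - b / real m \<le> 1" using assms by (auto simp: field_simps)
  have fin: "finite (set_pmf (U_E m))" by (simp add: set_UE)
  show fY: "finite (set_pmf Ys)"
    unfolding Ys_def by (rule finite_subset[OF set_mix[OF l0]]) (simp add: set_UE)
  then show "strategy Ys" by (rule strat_finite)
  show ex: "\<And>f. measure_pmf.expectation Ys f = (1 - b / real m) * f 0 + b / real m * ((\<Sum>i=0..m. f (2 * i)) / (real m + 1))"
    unfolding Ys_def by (subst exp_mix[OF l0]) (auto simp: fin exp_UE)
  show "mean Ys = b"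
  proof -
    have mp: "real m > 0" using assms by simp
    have "mean Ys = b / real m * (real m * (real m + 1) / (real m + 1))"
      unfolding mean_def ex sum_even_real by simp
    also have "real m * (real m + 1) / (real m + 1) = real m"
      by (rule nonzero_mult_div_cancel_right) (simp add: add_pos_nonneg)
    also have "b / real m * real m = b" using mp by simp
    finally show ?thesis .
  qed
  show "\<And>n. pmf Ys n = (1 - b / real m) * (if n = 0 then 1 else 0) + b / real m * (if n \<in> (\<lambda>k. 2 * k) ` {0..m} then 1 / (real m + 1) else 0)"
    unfolding Ys_def by (subst pmf_mix[OF l0]) (simp add: pmf_UE indicator_def)
qed

theorem lemma4:
  fixes v1 v2 :: real and m :: nat and \<alpha> b :: real and X Y :: "nat pmf"
  assumes "v1 \<ge> v2" and "v2 > 0"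
    and "m \<ge> 1"
    and "0 < \<alpha>" and "\<alpha> < 1"
    and "0 < b" and "b \<le> real m"
    and "mean X = real m + \<alpha>" and "mean Y = b"
    and "allpay_NE v1 v2 X Y"
  shows "real m * (real m + 1) / b = v1 / 2
         \<and> lotto_NE (real m + \<alpha>) b X Y
         \<and> Y = mix (1 - b / real m) (return_pmf 0) (U_E m)"
proof -
  note NE = assms(10)[unfolded allpay_NE_def]
  have sX: "strategy X" and sY: "strategy Y" using NE by auto
  have BR1: "\<And>X'. strategy X' \<Longrightarrow> allpay_payoff v1 X' Y \<le> allpay_payoff v1 X Y" using NE by auto
  have BR2: "\<And>Y'. strategy Y' \<Longrightarrow> allpay_payoff v2 Y' X \<le> allpay_payoff v2 Y X" using NE by auto
  have v1p: "v1 > 0" using assms by simp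
  have mp: "real m > 0" using assms by simp
  define a where "a = real m + \<alpha>"
  define c1 where "c1 = v1 / 2"
  have c1p: "c1 > 0" using v1p by (simp add: c1_def)
  have lotto: "lotto_NE (real m + \<alpha>) b X Y"
    unfolding lotto_NE_def
  proof (intro conjI allI impI)
    show "strategy X" "strategy Y" "mean X = real m + \<alpha>" "mean Y = b" using sX sY assms by auto
    fix X' assume "strategy X' \<and> mean X' = real m + \<alpha>"
    then have "v1/2 * Ew X' Y \<le> v1/2 * Ew X Y"
      using BR1[of X'] assms(8) by (simp add: payoff_rep)
    then show "lotto_H X' Y \<le> lotto_H X Y" using v1p by (simp add: lotto_rep)
  next
    fix Y' assume "strategy Y' \<and> mean Y' = b"
    then have "v2/2 * Ew Y' X \<le> v2/2 * Ew Y X"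
      using BR2[of Y'] assms(9) by (simp add: payoff_rep)
    then show "lotto_H Y' X \<le> lotto_H Y X" using assms(2) by (simp add: lotto_rep)
  qed
  define M1 where "M1 = c1 * Ew X Y - a"
  have pure: "c1 * wfn Y k - real k \<le> M1" for k
    using BR1[OF return_facts(1)[of k]] assms(8)
    by (simp add: payoff_rep return_facts M1_def c1_def a_def)
  \<comment> \<open>upper bound via the test strategy of player 2\<close>
  define Ys where "Ys = mix (1 - b / real m) (return_pmf 0) (U_E m)"
  note YsF = Ys_facts[OF assms(3,6,7), folded Ys_def]
  define W where "W = 2 - b * (real m + 1 - \<alpha>) / (real m * (real m + 1))"
  have EwUp: "Ew X Y \<le> W"
  proof -
    have "v2/2 * Ew Ys X \<le> v2/2 * Ew Y X"
      using BR2[OF YsF(2)] YsF(3) assms(9) by (simp add: payoff_rep)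
    then have le: "Ew Ys X \<le> Ew Y X" using assms(2) by simp
    have "(\<Sum>i=0..m. wfn X (2 * i)) = measure_pmf.expectation X (\<lambda>y. real (2 * m + 1 - y))"
      by (simp only: even_sum sumG)
    also have "\<dots> \<ge> real (2 * m + 1) - a" using exp_ge[OF sX, of "2 * m + 1"] assms(8) a_def by simp
    finally have s1: "(\<Sum>i=0..m. wfn X (2 * i)) \<ge> real m + 1 - \<alpha>" by (simp add: a_def)
    have w0: "wfn X 0 \<ge> 0" unfolding wfn_def Gc_def by simp
    have l0: "0 \<le> 1 - b / real m" using assms mp by (simp add: field_simps)
    have "Ew Ys X = (1 - b / real m) * wfn X 0 + b / real m * ((\<Sum>i=0..m. wfn X (2 * i)) / (real m + 1))"
      unfolding Ew_def by (rule YsF(4))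
    also have "\<dots> \<ge> b / real m * ((real m + 1 - \<alpha>) / (real m + 1))"
    proof -
      have "(1 - b / real m) * wfn X 0 \<ge> 0" using l0 w0 by simp
      moreover have "(\<Sum>i=0..m. wfn X (2 * i)) / (real m + 1) \<ge> (real m + 1 - \<alpha>) / (real m + 1)"
        using s1 by (simp add: divide_right_mono add_pos_nonneg)
      then have "b / real m * ((\<Sum>i=0..m. wfn X (2 * i)) / (real m + 1)) \<ge> b / real m * ((real m + 1 - \<alpha>) / (real m + 1))"
        using assms(6) mp by (intro mult_left_mono) auto
      ultimately show ?thesis by linarith
    qed
    finally have "Ew Ys X \<ge> b * (real m + 1 - \<alpha>) / (real m * (real m + 1))" by simp
    then show ?thesis using le Ew_sym[of X Y] unfolding W_def by linarith
  qed
  define T where "T n = (\<Sum>l<2*n. Gc Y l)" for n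
  have Texp: "T n = measure_pmf.expectation Y (\<lambda>y. real (2 * n - y))" for n
    unfolding T_def by (rule sumG)
  have Tge: "T n \<ge> 2 * real n - b" for n
    using exp_ge[OF sY, of "2 * n"] assms(9) Texp[of n] by simp
  define d where "d i = M1 + real (2 * i + 1) - c1 * wfn Y (2 * i + 1)" for i
  have dnn: "d i \<ge> 0" for i using pure[of "2 * i + 1"] unfolding d_def by simp
  have dsum: "(\<Sum>i<n. d i) = real n * M1 + real n * real n - c1 * T n" for n
  proof -
    have "(\<Sum>i<n. d i) = (\<Sum>i<n. M1) + (\<Sum>i<n. real (2 * i + 1)) - c1 * (\<Sum>i<n. wfn Y (2 * i + 1))"
      unfolding d_def by (simp add: sum.distrib sum_subtractf sum_distrib_left)
    then show ?thesis unfolding T_def odd_sum sum_odd_real by simp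
  qed
  define em where "em = T m - (2 * real m - b)"
  define e1 where "e1 = T (m + 1) - (2 * real (m + 1) - b)"
  define Dm where "Dm = (\<Sum>i<m. d i)"
  define D1 where "D1 = (\<Sum>i<m+1. d i)"
  have em0: "em \<ge> 0" "e1 \<ge> 0" using Tge[of m] Tge[of "m+1"] unfolding em_def e1_def by auto
  have D0: "Dm \<ge> 0" "D1 \<ge> 0" unfolding Dm_def D1_def by (rule sum_nonneg, rule dnn)+
  have Dm_eq: "Dm = real m * M1 + real m * real m - c1 * (em + 2 * real m - b)"
    unfolding Dm_def dsum em_def by simp
  have D1_eq: "D1 = (real m + 1) * M1 + (real m + 1) * (real m + 1) - c1 * (e1 + 2 * (real m + 1) - b)"
    unfolding D1_def dsum e1_def by (simp add: algebra_simps)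
  have ident: "(1 - \<alpha>) * (real m + 1) * Dm + \<alpha> * real m * D1 + c1 * ((1 - \<alpha>) * (real m + 1) * em + \<alpha> * real m * e1)
     = c1 * (real m * (real m + 1) * Ew X Y - 2 * real m * (real m + 1) + b * (real m + 1 - \<alpha>))"
    unfolding Dm_eq D1_eq M1_def a_def by (simp add: algebra_simps)
  have Wm: "real m * (real m + 1) * W = 2 * real m * (real m + 1) - b * (real m + 1 - \<alpha>)"
  proof -
    have nz: "real m * (real m + 1) \<noteq> 0" using mp by simp
    have "real m * (real m + 1) * (b * (real m + 1 - \<alpha>) / (real m * (real m + 1))) = b * (real m + 1 - \<alpha>)"
      by (simp only: times_divide_eq_right nonzero_mult_div_cancel_left[OF nz])
    then show ?thesis unfolding W_def by (simp add: right_diff_distrib)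
  qed
  have "real m * (real m + 1) * Ew X Y \<le> real m * (real m + 1) * W"
    using EwUp mp by (intro mult_left_mono) auto
  then have rhs: "real m * (real m + 1) * Ew X Y - 2 * real m * (real m + 1) + b * (real m + 1 - \<alpha>) \<le> 0"
    using Wm by linarith
  have t1: "(1 - \<alpha>) * (real m + 1) * Dm \<ge> 0" using D0 assms(5) by simp
  have t2: "\<alpha> * real m * D1 \<ge> 0" using D0 assms(4) by simp
  have t3: "(1 - \<alpha>) * (real m + 1) * em + \<alpha> * real m * e1 \<ge> 0" using em0 assms(4,5) by simp
  have t3': "c1 * ((1 - \<alpha>) * (real m + 1) * em + \<alpha> * real m * e1) \<ge> 0" using t3 c1p by simp
  have t4: "c1 * (real m * (real m + 1) * Ew X Y - 2 * real m * (real m + 1) + b * (real m + 1 - \<alpha>)) \<le> 0"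
    using rhs c1p by (simp add: mult_nonneg_nonpos)
  have z2: "\<alpha> * real m * D1 = 0" and z3: "c1 * ((1 - \<alpha>) * (real m + 1) * em + \<alpha> * real m * e1) = 0"
    and z4: "c1 * (real m * (real m + 1) * Ew X Y - 2 * real m * (real m + 1) + b * (real m + 1 - \<alpha>)) = 0"
    using ident t1 t2 t3' t4 by linarith+
  have D1z: "D1 = 0" using z2 assms(4) mp by simp
  have "(1 - \<alpha>) * (real m + 1) * em = 0" using z3 c1p t3 em0 assms(4,5) mp
    by (smt (verit, best) mult_eq_0_iff mult_nonneg_nonneg of_nat_0_le_iff)
  then have emz: "em = 0" using assms(5) by simp
  have EwW: "real m * (real m + 1) * Ew X Y = 2 * real m * (real m + 1) - b * (real m + 1 - \<alpha>)"
    using z4 c1p by simp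
  have dz: "d i = 0" if "i \<le> m" for i
    using D1z sum_nonneg_eq_0_iff[of "{..<m+1}" d] dnn that unfolding D1_def by auto
  have iY: "integrable (measure_pmf Y) real" using sY unfolding strategy_def .
  have i2: "integrable (measure_pmf Y) (\<lambda>y. real (2 * m - y))"
    by (rule int_bound[where C="real (2*m)"]) auto
  have "measure_pmf.expectation Y (\<lambda>y. real (2 * m - y) - (2 * real m - real y)) =
        measure_pmf.expectation Y (\<lambda>y. real (2 * m - y)) - (2 * real m - b)"
    using iY i2 assms(9) by (simp add: mean_def)
  also have "\<dots> = 0" using emz Texp[of m] unfolding em_def by simp
  finally have "AE y in measure_pmf Y. real (2 * m - y) - (2 * real m - real y) = 0"
    using integral_nonneg_eq_0_iff_AE[of "measure_pmf Y" "\<lambda>y. real (2 * m - y) - (2 * real m - real y)"] iY i2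
    by auto
  then have supp: "y \<le> 2 * m" if "y \<in> set_pmf Y" for y
    using that by (auto simp: AE_measure_pmf_iff)
  have pmf0: "pmf Y k = 0" if "k > 2 * m" for k
    using supp[of k] that by (auto simp: set_pmf_iff)
  define G where "G = Gc Y"
  have Gtop: "G k = 1" if "k \<ge> 2 * m" for k
  proof -
    have "measure_pmf.prob Y {k<..} = 0"
      using supp that by (force simp: measure_pmf_zero_iff)
    then show ?thesis unfolding G_def Gc_def using split_gt[of Y k] by simp
  qed
  have Gsuc: "pmf Y (Suc k) = G (Suc k) - G k" for k
    unfolding G_def Gc_sum by simp
  have Gz: "pmf Y 0 = G 0" unfolding G_def Gc_sum by simp
  have mono: "c1 * G k \<le> c1 * G (Suc k)" for k
    using Gsuc[of k] pmf_nonneg[of Y "Suc k"] c1p by simp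
  have eqodd: "c1 * (G (2 * i) + G (2 * i + 1)) = M1 + 2 * real i + 1" if "i \<le> m" for i
    using dz[OF that] wfn_Suc[of Y "2 * i"] unfolding d_def G_def by simp
  have ineq: "c1 * (G (2 * k + 1) + G (2 * k + 2)) \<le> M1 + 2 * real k + 2" for k
    using pure[of "Suc (2 * k + 1)"] wfn_Suc[of Y "2 * k + 1"] unfolding G_def by simp
  have P: "G (2 * k + 1) = G (2 * k)" if "k \<le> m" for k
    using that
  proof (induction k rule: inc_induct)
    case base
    then show ?case using Gtop[of "2 * m"] Gtop[of "2 * m + 1"] by simp
  next
    case (step n)
    have e1': "c1 * (G (2 * (n+1)) + G (2 * (n+1) + 1)) = M1 + 2 * real (n+1) + 1"
      using eqodd[of "n+1"] step by simp
    have e0: "c1 * (G (2 * n) + G (2 * n + 1)) = M1 + 2 * real n + 1"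
      using eqodd[of n] step by simp
    have h: "G (2 * (n+1) + 1) = G (2 * (n+1))" using step.IH by simp
    have A: "2 * (c1 * G (2 * n + 2)) = M1 + 2 * real n + 3"
      using e1' h by (simp add: distrib_left algebra_simps)
    have B: "c1 * G (2 * n) + c1 * G (2 * n + 1) = M1 + 2 * real n + 1"
      using e0 by (simp add: distrib_left)
    have C: "c1 * G (2 * n + 1) + c1 * G (2 * n + 2) \<le> M1 + 2 * real n + 2"
      using ineq[of n] by (simp add: distrib_left)
    have "c1 * G (2 * n) = c1 * G (2 * n + 1)"
    proof -
      have D: "c1 * G (2 * n) \<le> c1 * G (2 * n + 1)" using mono[of "2 * n"] by simp
      show ?thesis using A B C D by linarith
    qed
    then show ?case using c1p by simp
  qed
  have Gk: "2 * (c1 * G (2 * k)) = M1 + 2 * real k + 1" if "k \<le> m" for k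
  proof -
    have "G (2 * k + 1) = G (2 * k)" by (rule P[OF that])
    then show ?thesis using eqodd[OF that] by (simp add: distrib_left)
  qed
  have top: "2 * c1 = M1 + 2 * real m + 1" using Gk[of m] Gtop[of "2 * m"] by simp
  define r where "r = real m"
  have rp: "r > 0" using mp r_def by simp
  have c1b: "c1 * b = r * (r + 1)"
  proof -
    have e: "2 * c1 = c1 * Ew X Y + r + 1 - \<alpha>" using top unfolding M1_def a_def r_def by simp
    have e2: "r * (r + 1) * Ew X Y = 2 * r * (r + 1) - b * (r + 1 - \<alpha>)" using EwW unfolding r_def .
    have id: "(r * (r + 1) - c1 * b) * (r + 1 - \<alpha>) =
        r * (r + 1) * (c1 * Ew X Y + r + 1 - \<alpha>) - r * (r + 1) * (2 * c1) - c1 * (r * (r + 1) * Ew X Y - (2 * r * (r + 1) - b * (r + 1 - \<alpha>)))"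
      by (simp add: algebra_simps)
    have "(r * (r + 1) - c1 * b) * (r + 1 - \<alpha>) = 0" unfolding id using e e2 by simp
    moreover have "r + 1 - \<alpha> \<noteq> 0" using rp assms(5) by simp
    ultimately show ?thesis by simp
  qed
  have conj1: "real m * (real m + 1) / b = v1 / 2"
    using c1b assms(6) unfolding c1_def r_def by (simp add: field_simps)
  have diff: "c1 * (G (2 * k + 2) - G (2 * k + 1)) = 1" if "k < m" for k
  proof -
    have "2 * (c1 * G (2 * (k + 1))) = M1 + 2 * real (k + 1) + 1" using Gk[of "k+1"] that by simp
    moreover have "2 * (c1 * G (2 * k)) = M1 + 2 * real k + 1" using Gk[of k] that by simp
    moreover have "G (2 * k + 1) = G (2 * k)" using P[of k] that by simp
    ultimately show ?thesis by (simp add: algebra_simps)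
  qed
  have G0: "c1 * G 0 = c1 - r" using Gk[of 0] top unfolding r_def by simp
  have cbr: "c1 * (b / r) = r + 1" using c1b rp by (simp add: field_simps)
  have cbr2: "c1 * (b / r * (1 / (r + 1))) = 1"
  proof -
    have "r * (r + 1) > 0" using rp by simp
    then show ?thesis using c1b by (simp add: field_simps)
  qed
  have Yeq: "Y = Ys"
  proof (rule pmf_eqI)
    fix n
    define E where "E = (\<lambda>k::nat. 2 * k) ` {0..m}"
    have rhs: "pmf Ys n = (1 - b / r) * (if n = 0 then 1 else 0) + b / r * (if n \<in> E then 1 / (r + 1) else 0)"
      using YsF(5)[of n] unfolding E_def r_def .
    have "c1 * pmf Y n = c1 * pmf Ys n"
    proof -
      have "\<exists>k. n = 2 * k \<or> n = Suc (2 * k)" by presburger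
      then obtain k where k: "n = 2 * k \<or> n = Suc (2 * k)" by blast
      consider (z) "n = 0" | (ev) j where "n = 2 * Suc j" "Suc j \<le> m" | (evb) "n = 2 * k" "k > m"
        | (od) "n = Suc (2 * k)" "k \<le> m" | (odb) "n = Suc (2 * k)" "k > m"
        using k by (metis not0_implies_Suc not_le mult_0_right)
      then show ?thesis
      proof cases
        case z
        have "0 \<in> E" unfolding E_def using mem_E_even[of 0 m] by simp
        then have "pmf Ys n = (1 - b / r) + b / r * (1 / (r + 1))" using rhs z by simp
        then have "c1 * pmf Ys n = c1 - c1 * (b / r) + c1 * (b / r * (1 / (r + 1)))"
          by (simp only: right_diff_distrib distrib_left mult_1_right)
        moreover have "c1 * pmf Y n = c1 - r" using Gz G0 z by simp
        ultimately show ?thesis using cbr cbr2 by linarith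
      next
        case (ev j)
        have "n \<in> E" unfolding E_def using ev mem_E_even[of "Suc j" m] by simp
        then have "pmf Ys n = b / r * (1 / (r + 1))" using rhs ev by simp
        then have 1: "c1 * pmf Ys n = 1" by (simp only: cbr2)
        have "pmf Y n = G (2 * j + 2) - G (2 * j + 1)" using Gsuc[of "2 * j + 1"] ev by simp
        then have "c1 * pmf Y n = 1" using diff[of j] ev by simp
        then show ?thesis using 1 by simp
      next
        case evb
        have "n \<notin> E" unfolding E_def using evb mem_E_even[of k m] by simp
        moreover have "pmf Y n = 0" using pmf0[of n] evb by simp
        moreover have "n \<noteq> 0" using evb by simp
        ultimately show ?thesis using rhs by simp
      next
        case od
        have "n \<notin> E" unfolding E_def using od mem_E_odd[of k m] by simp
        moreover have "pmf Y n = 0" using Gsuc[of "2 * k"] P[of k] od by simp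
        moreover have "n \<noteq> 0" using od by simp
        ultimately show ?thesis using rhs by simp
      next
        case odb
        have "n \<notin> E" unfolding E_def using odb mem_E_odd[of k m] by simp
        moreover have "pmf Y n = 0" using pmf0[of n] odb by simp
        moreover have "n \<noteq> 0" using odb by simp
        ultimately show ?thesis using rhs by simp
      qed
    qed
    then show "pmf Y n = pmf Ys n" using c1p by simp
  qed
  show ?thesis using conj1 lotto Yeq unfolding Ys_def by simp
qed

end
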